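(* Let $K\ge 3$, $\alpha\in[2:K-1]$, $F\in\mathbb{Z}^+$, and consider the symmetric $(K,\alpha,F)$ FDS structure with $N=F\binom{K}{\alpha}\ge K$. For $t\in[0:K]$ let $R_{\mathrm{MAN}}(t)=\frac{K-t}{t+1}$ denote the load of the Maddah-Ali–Niesen scheme at cache size $M=tN/K$, and write $R^\star_{\mathrm{u},\mathrm{s}}(t)$ for $R^\star_{\mathrm{u},\mathrm{s}}(tN/K)$. Then $$\frac{R^\star_{\mathrm{u},\mathrm{s}}(t)}{R_{\mathrm{MAN}}(t)}\ge 1\quad\text{for all } t\in[0:\alpha-1],\qquad \frac{R^\star_{\mathrm{u},\mathrm{s}}(t)}{R_{\mathrm{MAN}}(t)}> 1\quad\text{for all } t\in\{1,\dots,\alpha-2\}.$$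
   Context: Notation: $[n]=\{1,\dots,n\}$, $[a:b]=\{a,\dots,b\}$. Symmetric $(K,\alpha,F)$ FDS structure: the library consists of $N=F\binom{K}{\alpha}$ distinct files $W_{f,\mathcal S}$, indexed by $f\in[F]$ and $\mathcal S\subseteq[K]$ with $|\mathcal S|=\alpha$; the file class $\mathcal W_{\mathcal S}=\{W_{f,\mathcal S}:f\in[F]\}$ is of interest exactly to the users in $\mathcal S$. The file demand set (FDS) of user $k\in[K]$ is $\mathcal F_k=\{W_{f,\mathcal S}: f\in[F],\ |\mathcal S|=\alpha,\ k\in\mathcal S\}$. Caching model (centralized): a server stores the $N$ files, each consisting of $B$ independent uniformly random bits, and is connected to $K$ users by an error-free shared broadcast link; each user has a cache of $MB$ bits. In the placement phase the server fills the caches without knowing the future demands. In the delivery phase each user $k$ requests one file in $\mathcal F_k$; the server then broadcasts a message from which each user must decode its requested file using its cache contents. A pair $(M,R)$ is achievable if there is a scheme such that for every admissible demand at most $RB$ bits are transmitted; the optimal worst-case load is the infimum of achievable $R$. Uncoded and selfish placement: caches contain plain copies of bits of files, and user $k$ may cache bits of $W_{f,\mathcal S}$ only if $k\in\mathcal S$. $R^\star_{\mathrm{u},\mathrm{s}}(M)$ is the optimal worst-case load when the placement is restricted to be uncoded and selfish. *)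

theory Defs
  imports Complex_Main
begin

type_synonym fidx = "nat \<times> nat set"

definition lib :: "nat \<Rightarrow> nat \<Rightarrow> nat \<Rightarrow> fidx set" where
  "lib K \<alpha> F = {(f, S). f \<in> {1..F} \<and> S \<subseteq> {1..K} \<and> card S = \<alpha>}"

definition admissible_demand :: "nat \<Rightarrow> nat \<Rightarrow> nat \<Rightarrow> (nat \<Rightarrow> fidx) \<Rightarrow> bool" where
  "admissible_demand K \<alpha> F d \<longleftrightarrow> (\<forall>k\<in>{1..K}. d k \<in> lib K \<alpha> F \<and> k \<in> snd (d k))"

text \<open>Uncoded and selfish placement: user k stores plain bits (file, bit index) of files W_{f,S}
  with k in S only, at most M B bits.\<close>
definition us_placement :: "nat \<Rightarrow> nat \<Rightarrow> nat \<Rightarrow> nat \<Rightarrow> real \<Rightarrow> (nat \<Rightarrow> (fidx \<times> nat) set) \<Rightarrow> bool" where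
  "us_placement K \<alpha> F B M Z \<longleftrightarrow>
     (\<forall>k\<in>{1..K}. Z k \<subseteq> {(n, b). n \<in> lib K \<alpha> F \<and> k \<in> snd n \<and> b < B}
                 \<and> real (card (Z k)) \<le> M * real B)"

definition cache_content :: "(nat \<Rightarrow> (fidx \<times> nat) set) \<Rightarrow> nat \<Rightarrow> (fidx \<Rightarrow> nat \<Rightarrow> bool) \<Rightarrow> (fidx \<times> nat \<Rightarrow> bool)" where
  "cache_content Z k w = (\<lambda>(n, b). if (n, b) \<in> Z k then w n b else False)"

definition us_achievable :: "nat \<Rightarrow> nat \<Rightarrow> nat \<Rightarrow> real \<Rightarrow> real \<Rightarrow> bool" where
  "us_achievable K \<alpha> F M R \<longleftrightarrow>
     (\<exists>(B::nat) Z (enc :: (nat \<Rightarrow> fidx) \<Rightarrow> (fidx \<Rightarrow> nat \<Rightarrow> bool) \<Rightarrow> bool list)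
        (dec :: (nat \<Rightarrow> fidx) \<Rightarrow> nat \<Rightarrow> bool list \<Rightarrow> (fidx \<times> nat \<Rightarrow> bool) \<Rightarrow> nat \<Rightarrow> bool).
        B > 0 \<and> us_placement K \<alpha> F B M Z \<and>
        (\<forall>d. admissible_demand K \<alpha> F d \<longrightarrow>
           (\<forall>w. real (length (enc d w)) \<le> R * real B \<and>
                (\<forall>k\<in>{1..K}. \<forall>b<B. dec d k (enc d w) (cache_content Z k w) b = w (d k) b))))"

definition Rstar_us :: "nat \<Rightarrow> nat \<Rightarrow> nat \<Rightarrow> real \<Rightarrow> real" where
  "Rstar_us K \<alpha> F M = Inf {R. us_achievable K \<alpha> F M R}"

definition R_MAN :: "nat \<Rightarrow> nat \<Rightarrow> real" where
  "R_MAN K t = (real K - real t) / (real t + 1)"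

end

theory Submission
  imports Defs "HOL-Combinatorics.Permutations"
begin

lemma sum_pow2_less: "(\<Sum>i\<le>m. (2::nat)^i) < 2^(Suc m)"
  by (induction m) auto

lemma core:
  fixes E :: "(fidx \<Rightarrow> nat \<Rightarrow> bool) \<Rightarrow> bool list"
    and Dk :: "nat \<Rightarrow> bool list \<Rightarrow> (fidx \<times> nat \<Rightarrow> bool) \<Rightarrow> nat \<Rightarrow> bool"
    and e :: "nat \<Rightarrow> fidx" and v :: "nat \<Rightarrow> nat"
  assumes len: "\<And>w. real (length (E w)) \<le> L"
    and dec: "\<And>w k b. k \<in> {1..K} \<Longrightarrow> b < B \<Longrightarrow> Dk k (E w) (cache_content Z k w) b = w (e k) b"
    and v: "\<And>i. i \<in> {1..n} \<Longrightarrow> v i \<in> {1..K}"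
    and inj: "inj_on (\<lambda>i. e (v i)) {1..n}"
  shows "real (\<Sum>i=1..n. card {b. b < B \<and> (\<forall>j\<in>{1..i}. (e (v i), b) \<notin> Z (v j))}) \<le> L"
proof -
  define A where "A i = {b. b < B \<and> (\<forall>j\<in>{1..i}. (e (v i), b) \<notin> Z (v j))}" for i
  define D where "D = (\<Union>i\<in>{1..n}. (\<lambda>b. (e (v i), b)) ` A i)"
  have finA: "finite (A i)" for i unfolding A_def by auto
  have cardD: "card D = (\<Sum>i=1..n. card (A i))"
    unfolding D_def
  proof (subst card_UN_disjoint)
    show "finite {1..n}" by simp
    show "\<forall>i\<in>{1..n}. finite ((\<lambda>b. (e (v i), b)) ` A i)" using finA by auto
    show "\<forall>i\<in>{1..n}. \<forall>j\<in>{1..n}. i \<noteq> j \<longrightarrow> (\<lambda>b. (e (v i), b)) ` A i \<inter> (\<lambda>b. (e (v j), b)) ` A j = {}"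
    proof (intro ballI impI)
      fix i j assume "i \<in> {1..n}" "j \<in> {1..n}" "i \<noteq> j"
      then have "e (v i) \<noteq> e (v j)" using inj_onD[OF inj] by blast
      then show "(\<lambda>b. (e (v i), b)) ` A i \<inter> (\<lambda>b. (e (v j), b)) ` A j = {}" by auto
    qed
    show "(\<Sum>i = 1..n. card ((\<lambda>b. (e (v i), b)) ` A i)) = sum (\<lambda>i. card (A i)) {1..n}"
      by (intro sum.cong refl card_image) (auto simp: inj_on_def)
  qed
  have finD: "finite D" unfolding D_def using finA by auto
  define W where "W x = (\<lambda>p b. (p, b) \<in> x)" for x :: "(fidx \<times> nat) set"
  have injE: "inj_on (\<lambda>x. E (W x)) (Pow D)"
  proof (rule inj_onI)
    fix x y assume x: "x \<in> Pow D" and y: "y \<in> Pow D" and eq: "E (W x) = E (W y)"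
    have agree: "\<forall>b\<in>A i. ((e (v i), b) \<in> x \<longleftrightarrow> (e (v i), b) \<in> y)" if "i \<in> {1..n}" for i
      using that
    proof (induction i rule: less_induct)
      case (less i)
      have cc: "cache_content Z (v i) (W x) = cache_content Z (v i) (W y)"
      proof
        fix pb :: "fidx \<times> nat"
        obtain p b' where pb: "pb = (p, b')" by (cases pb)
        show "cache_content Z (v i) (W x) pb = cache_content Z (v i) (W y) pb"
        proof (cases "(p, b') \<in> Z (v i)")
          case False thus ?thesis by (simp add: cache_content_def pb)
        next
          case True
          show ?thesis
          proof (cases "(p, b') \<in> D")
            case False
            then have "(p,b') \<notin> x" "(p,b') \<notin> y" using x y by auto
            then show ?thesis by (simp add: cache_content_def pb W_def)
          next
            case inD: True
            then obtain i' where i': "i' \<in> {1..n}" "p = e (v i')" "b' \<in> A i'"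
              unfolding D_def by auto
            have "i' < i"
            proof (rule ccontr)
              assume "\<not> i' < i"
              then have "i \<in> {1..i'}" using less.prems by auto
              then have "(e (v i'), b') \<notin> Z (v i)" using i'(3) unfolding A_def by auto
              then show False using True i'(2) by simp
            qed
            then have "(p, b') \<in> x \<longleftrightarrow> (p, b') \<in> y" using less.IH[of i'] i' by auto
            then show ?thesis by (simp add: cache_content_def pb W_def)
          qed
        qed
      qed
      show ?case
      proof
        fix b assume b: "b \<in> A i"
        then have bB: "b < B" unfolding A_def by auto
        have vi: "v i \<in> {1..K}" using v less.prems by auto
        have "W x (e (v i)) b = W y (e (v i)) b"
          using dec[OF vi bB, of "W x"] dec[OF vi bB, of "W y"] eq cc by metis
        then show "(e (v i), b) \<in> x \<longleftrightarrow> (e (v i), b) \<in> y" by (simp add: W_def)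
      qed
    qed
    show "x = y"
    proof (rule set_eqI)
      fix pb
      show "pb \<in> x \<longleftrightarrow> pb \<in> y"
      proof (cases "pb \<in> D")
        case False then show ?thesis using x y by auto
      next
        case True
        then obtain i b where "i \<in> {1..n}" "b \<in> A i" "pb = (e (v i), b)" unfolding D_def by auto
        then show ?thesis using agree by auto
      qed
    qed
  qed
  define m where "m = nat \<lfloor>L\<rfloor>"
  have lenm: "length (E w) \<le> m" for w
  proof -
    have "real (length (E w)) \<le> L" by (rule len)
    then have "int (length (E w)) \<le> \<lfloor>L\<rfloor>" by linarith
    then show ?thesis unfolding m_def by linarith
  qed
  have sub: "(\<lambda>x. E (W x)) ` Pow D \<subseteq> {xs. set xs \<subseteq> (UNIV::bool set) \<and> length xs \<le> m}"
    using lenm by auto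
  have "2 ^ card D = card (Pow D)" using finD by (simp add: card_Pow)
  also have "\<dots> = card ((\<lambda>x. E (W x)) ` Pow D)" using injE by (simp add: card_image)
  also have "\<dots> \<le> card {xs. set xs \<subseteq> (UNIV::bool set) \<and> length xs \<le> m}"
    by (rule card_mono[OF _ sub]) (rule finite_lists_length_le[OF finite_UNIV])
  also have "\<dots> = (\<Sum>i\<le>m. 2^i)" using card_lists_length_le[of "UNIV::bool set" m] by simp
  also have "\<dots> < 2 ^ Suc m" by (rule sum_pow2_less)
  finally have "(2::nat) ^ card D < 2 ^ Suc m" .
  then have "card D < Suc m" using power_less_imp_less_exp[of "2::nat" "card D" "Suc m"] by simp
  then have "card D \<le> m" by simp
  then have "real (card D) \<le> real m" by simp
  also have "real m \<le> L"
  proof -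
    have "real (length (E undefined)) \<le> L" by (rule len)
    then have "L \<ge> 0" by simp
    then show ?thesis unfolding m_def by linarith
  qed
  finally show ?thesis using cardD unfolding A_def by simp
qed

lemma exists_perm_image:
  assumes "finite A" "X \<subseteq> A" "Y \<subseteq> A" "card X = card Y"
  shows "\<exists>\<sigma>. \<sigma> permutes A \<and> \<sigma> ` X = Y"
proof -
  have fX: "finite X" "finite Y" using finite_subset[OF assms(2,1)] finite_subset[OF assms(3,1)] by auto
  obtain g where g: "bij_betw g X Y" using finite_same_card_bij[OF fX assms(4)] by blast
  have "card (A - X) = card (A - Y)"
    using assms fX by (simp add: card_Diff_subset)
  then obtain h where h: "bij_betw h (A - X) (A - Y)"
    using finite_same_card_bij[OF finite_Diff[OF assms(1)] finite_Diff[OF assms(1)]] by blast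
  define \<sigma> where "\<sigma> x = (if x \<in> X then g x else if x \<in> A then h x else x)" for x
  have b1: "bij_betw \<sigma> X Y" using g by (rule bij_betw_cong[THEN iffD1, rotated]) (simp add: \<sigma>_def)
  have b2: "bij_betw \<sigma> (A - X) (A - Y)" using h by (rule bij_betw_cong[THEN iffD1, rotated]) (simp add: \<sigma>_def)
  have U: "X \<union> (A - X) = A" "Y \<union> (A - Y) = A" using assms by auto
  have "bij_betw \<sigma> (X \<union> (A - X)) (Y \<union> (A - Y))"
    by (rule bij_betw_combine[OF b1 b2]) blast
  then have bA: "bij_betw \<sigma> A A" by (simp only: U)
  have st: "\<And>x. x \<notin> A \<Longrightarrow> \<sigma> x = x" using assms(2) unfolding \<sigma>_def by auto
  have p: "\<sigma> permutes A" by (rule bij_imp_permutes[OF bA st])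
  have i: "\<sigma> ` X = Y" using b1 by (simp add: bij_betw_def)
  show ?thesis by (rule exI[of _ \<sigma>]) (use p i in simp)
qed

lemma exists_perm_image2:
  assumes "finite A" "Q \<subseteq> P" "P \<subseteq> A" "V \<subseteq> S" "S \<subseteq> A" "card P = card S" "card Q = card V"
  shows "\<exists>\<sigma>. \<sigma> permutes A \<and> \<sigma> ` P = S \<and> \<sigma> ` Q = V"
proof -
  obtain s1 where s1: "s1 permutes A" "s1 ` P = S" using exists_perm_image[OF assms(1,3,5,6)] by blast
  have "s1 ` Q \<subseteq> S" using s1 assms by auto
  moreover have "card (s1 ` Q) = card V"
    using assms(7) card_image[OF inj_on_subset[OF permutes_inj[OF s1(1)] subset_UNIV]] by simp
  moreover have "finite S" using assms(1,5) finite_subset by blast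
  ultimately obtain s2 where s2: "s2 permutes S" "s2 ` (s1 ` Q) = V"
    using exists_perm_image[of S "s1 ` Q" V] assms by blast
  have "s2 \<circ> s1 permutes A" using permutes_compose[OF s1(1) permutes_subset[OF s2(1) assms(5)]] .
  moreover have "(s2 \<circ> s1) ` P = S" using s1 permutes_image[OF s2(1)] by (metis image_comp)
  moreover have "(s2 \<circ> s1) ` Q = V" using s2 by (metis image_comp)
  ultimately show ?thesis by (intro exI[of _ "s2 \<circ> s1"]) simp
qed

lemma fiber_card_eq:
  assumes "finite A" "Q \<subseteq> P" "P \<subseteq> A" "V \<subseteq> S" "S \<subseteq> A" "card P = card S" "card Q = card V"
  shows "card {u. u permutes A \<and> u ` P = S \<and> u ` Q = V} = card {u. u permutes A \<and> u ` P = P \<and> u ` Q = Q}"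
proof -
  obtain \<sigma> where s: "\<sigma> permutes A" "\<sigma> ` P = S" "\<sigma> ` Q = V" using exists_perm_image2[OF assms] by blast
  have injs: "inj \<sigma>" using permutes_inj[OF s(1)] .
  have inj: "inj_on (\<lambda>u. \<sigma> \<circ> u) {u. u permutes A \<and> u ` P = P \<and> u ` Q = Q}"
  proof (rule inj_onI)
    fix u u' assume "\<sigma> \<circ> u = \<sigma> \<circ> u'"
    then have "\<sigma> (u x) = \<sigma> (u' x)" for x by (metis comp_apply)
    then show "u = u'" using injD[OF injs] by blast
  qed
  have img: "(\<lambda>u. \<sigma> \<circ> u) ` {u. u permutes A \<and> u ` P = P \<and> u ` Q = Q} = {u. u permutes A \<and> u ` P = S \<and> u ` Q = V}"
  proof
    show "(\<lambda>u. \<sigma> \<circ> u) ` {u. u permutes A \<and> u ` P = P \<and> u ` Q = Q} \<subseteq> {u. u permutes A \<and> u ` P = S \<and> u ` Q = V}"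
    proof
      fix w assume "w \<in> (\<lambda>u. \<sigma> \<circ> u) ` {u. u permutes A \<and> u ` P = P \<and> u ` Q = Q}"
      then obtain u where u: "u permutes A" "u ` P = P" "u ` Q = Q" "w = \<sigma> \<circ> u" by blast
      have "w permutes A" using u(1,4) permutes_compose[OF u(1) s(1)] by simp
      moreover have "w ` P = S" using u s by (metis image_comp)
      moreover have "w ` Q = V" using u s by (metis image_comp)
      ultimately show "w \<in> {u. u permutes A \<and> u ` P = S \<and> u ` Q = V}" by blast
    qed
  next
    show "{u. u permutes A \<and> u ` P = S \<and> u ` Q = V} \<subseteq> (\<lambda>u. \<sigma> \<circ> u) ` {u. u permutes A \<and> u ` P = P \<and> u ` Q = Q}"
    proof
      fix w assume w: "w \<in> {u. u permutes A \<and> u ` P = S \<and> u ` Q = V}"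
      have e1: "w = \<sigma> \<circ> (inv \<sigma> \<circ> w)" using permutes_inverses(1)[OF s(1)] by (auto simp: fun_eq_iff)
      have "inv \<sigma> \<circ> w permutes A" using w permutes_compose[OF _ permutes_inv[OF s(1)]] by auto
      moreover have "(inv \<sigma> \<circ> w) ` P = P" using w s image_inv_f_f[OF injs] by (metis (mono_tags, lifting) image_comp mem_Collect_eq)
      moreover have "(inv \<sigma> \<circ> w) ` Q = Q" using w s image_inv_f_f[OF injs] by (metis (mono_tags, lifting) image_comp mem_Collect_eq)
      ultimately have "inv \<sigma> \<circ> w \<in> {u. u permutes A \<and> u ` P = P \<and> u ` Q = Q}" by simp
      then show "w \<in> (\<lambda>u. \<sigma> \<circ> u) ` {u. u permutes A \<and> u ` P = P \<and> u ` Q = Q}"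
        by (rule image_eqI[where f="\<lambda>u. \<sigma> \<circ> u" and x="inv \<sigma> \<circ> w", OF e1])
    qed
  qed
  show ?thesis using card_image[OF inj] img by simp
qed

lemma sum_perms:
  fixes \<phi> :: "'a set \<Rightarrow> 'a set \<Rightarrow> real"
  assumes fin: "finite A" and QP: "Q \<subseteq> P" and PA: "P \<subseteq> A"
  defines "Pairs \<equiv> {(S,V). S \<subseteq> A \<and> card S = card P \<and> V \<subseteq> S \<and> card V = card Q}"
    and "c \<equiv> card {u. u permutes A \<and> u ` P = P \<and> u ` Q = Q}"
  shows "(\<Sum>u\<in>{u. u permutes A}. \<phi> (u ` P) (u ` Q)) = real c * (\<Sum>(S,V)\<in>Pairs. \<phi> S V)"
proof -
  have finPairs: "finite Pairs"
  proof (rule finite_subset)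
    show "Pairs \<subseteq> Pow A \<times> Pow A" unfolding Pairs_def by auto
  qed (simp add: fin)
  have sub: "(\<lambda>u. (u ` P, u ` Q)) ` {u. u permutes A} \<subseteq> Pairs"
  proof
    fix x assume "x \<in> (\<lambda>u. (u ` P, u ` Q)) ` {u. u permutes A}"
    then obtain u where u: "u permutes A" "x = (u ` P, u ` Q)" by blast
    have i1: "u ` P \<subseteq> A" using image_mono[OF PA, of u] permutes_image[OF u(1)] by simp
    have i2: "u ` Q \<subseteq> u ` P" using QP by (rule image_mono)
    have injX: "inj_on u X" for X by (rule inj_on_subset[OF permutes_inj[OF u(1)] subset_UNIV])
    have i3: "card (u ` P) = card P" by (rule card_image[OF injX])
    have i4: "card (u ` Q) = card Q" by (rule card_image[OF injX])
    show "x \<in> Pairs" unfolding Pairs_def u(2) using i1 i2 i3 i4 by simp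
  qed
  have "(\<Sum>u\<in>{u. u permutes A}. \<phi> (u ` P) (u ` Q))
      = (\<Sum>p\<in>Pairs. \<Sum>u\<in>{u \<in> {u. u permutes A}. (u ` P, u ` Q) = p}. \<phi> (u ` P) (u ` Q))"
    using sum.group[where S="{u. u permutes A}" and T=Pairs and g="\<lambda>u. (u ` P, u ` Q)" and h="\<lambda>u. \<phi> (u ` P) (u ` Q)",
        OF finite_permutations[OF fin] finPairs sub] by simp
  also have "\<dots> = (\<Sum>p\<in>Pairs. real c * \<phi> (fst p) (snd p))"
  proof (rule sum.cong[OF refl])
    fix p assume p: "p \<in> Pairs"
    obtain S V where pSV: "p = (S, V)" by (cases p)
    have eqset: "{u \<in> {u. u permutes A}. (u ` P, u ` Q) = p} = {u. u permutes A \<and> u ` P = S \<and> u ` Q = V}"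
      unfolding pSV by simp
    have hp: "S \<subseteq> A" "card S = card P" "V \<subseteq> S" "card V = card Q"
      using p unfolding pSV Pairs_def by simp_all
    have cc: "card {u. u permutes A \<and> u ` P = S \<and> u ` Q = V} = c"
      unfolding c_def by (rule fiber_card_eq[OF fin QP PA hp(3) hp(1) hp(2)[symmetric] hp(4)[symmetric]])
    have "(\<Sum>u\<in>{u \<in> {u. u permutes A}. (u ` P, u ` Q) = p}. \<phi> (u ` P) (u ` Q))
        = (\<Sum>u\<in>{u. u permutes A \<and> u ` P = S \<and> u ` Q = V}. \<phi> S V)"
      by (rule sum.cong[OF eqset]) simp
    also have "\<dots> = real c * \<phi> S V" using cc by simp
    finally show "(\<Sum>u\<in>{u \<in> {u. u permutes A}. (u ` P, u ` Q) = p}. \<phi> (u ` P) (u ` Q)) = real c * \<phi> (fst p) (snd p)"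
      using pSV by simp
  qed
  also have "\<dots> = real c * (\<Sum>(S,V)\<in>Pairs. \<phi> S V)"
    by (simp add: sum_distrib_left case_prod_beta)
  finally show ?thesis .
qed

lemma finite_subsets_of: "finite A \<Longrightarrow> finite {S. S \<subseteq> A \<and> Pr S}"
  by (rule rev_finite_subset[of "Pow A"]) auto

lemma card_Pairs:
  assumes fin: "finite A" and QP: "Q \<subseteq> P" and PA: "P \<subseteq> A"
  shows "card {(S,V). S \<subseteq> A \<and> card S = card P \<and> V \<subseteq> S \<and> card V = card Q}
         = (card A choose card P) * (card P choose card Q)"
proof -
  define Sets where "Sets = {S. S \<subseteq> A \<and> card S = card P}"
  define Vs :: "'a set \<Rightarrow> 'a set set" where "Vs S = {V. V \<subseteq> S \<and> card V = card Q}" for S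
  have eq: "{(S,V). S \<subseteq> A \<and> card S = card P \<and> V \<subseteq> S \<and> card V = card Q} = Sigma Sets Vs"
    unfolding Sets_def Vs_def by blast
  have fS: "finite Sets" unfolding Sets_def by (rule finite_subsets_of[OF fin])
  have fV: "\<forall>S\<in>Sets. finite (Vs S)"
  proof
    fix S assume "S \<in> Sets"
    then have "finite S" unfolding Sets_def using fin finite_subset by blast
    then show "finite (Vs S)" unfolding Vs_def by (rule finite_subsets_of)
  qed
  have "card (Sigma Sets Vs) = (\<Sum>S\<in>Sets. card (Vs S))"
    by (rule card_SigmaI[OF fS fV])
  also have "\<dots> = (\<Sum>S\<in>Sets. card P choose card Q)"
  proof (rule sum.cong[OF refl])
    fix S assume S: "S \<in> Sets"
    then have "finite S" unfolding Sets_def using fin finite_subset by blast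
    then have "card (Vs S) = card S choose card Q" unfolding Vs_def by (rule n_subsets)
    then show "card (Vs S) = card P choose card Q" using S unfolding Sets_def by simp
  qed
  also have "\<dots> = card Sets * (card P choose card Q)" by simp
  also have "card Sets = card A choose card P" unfolding Sets_def by (rule n_subsets[OF fin])
  finally show ?thesis unfolding eq .
qed

lemma fiber_times_pairs:
  assumes fin: "finite A" and QP: "Q \<subseteq> P" and PA: "P \<subseteq> A"
  shows "real (card {u. u permutes A \<and> u ` P = P \<and> u ` Q = Q}) * real ((card A choose card P) * (card P choose card Q))
     = fact (card A)"
proof -
  define Pairs where "Pairs = {(S,V). S \<subseteq> A \<and> card S = card P \<and> V \<subseteq> S \<and> card V = card Q}"
  define c where "c = card {u. u permutes A \<and> u ` P = P \<and> u ` Q = Q}"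
  define Perms where "Perms = {u. u permutes A}"
  have h: "(\<Sum>u\<in>Perms. (1::real)) = real c * (\<Sum>(S,V)\<in>Pairs. (1::real))"
    unfolding Pairs_def c_def Perms_def by (rule sum_perms[OF fin QP PA])
  have e1: "(\<Sum>u\<in>Perms. (1::real)) = real (card Perms)" by simp
  have e1': "card Perms = fact (card A)" unfolding Perms_def by (rule card_permutations[OF refl fin])
  have cp: "(\<lambda>(S::'a set, V::'a set). (1::real)) = (\<lambda>_. 1)" by auto
  have e2: "(\<Sum>(S,V)\<in>Pairs. (1::real)) = real (card Pairs)" unfolding cp by simp
  have e2': "card Pairs = (card A choose card P) * (card P choose card Q)"
    unfolding Pairs_def by (rule card_Pairs[OF fin QP PA])
  have f1: "(fact (card A)::real) = real (card Perms)" using e1' by simp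
  have f2: "real (card Perms) = real c * real (card Pairs)" using h e1 e2 by simp
  have f3: "(fact (card A)::real) = real c * real ((card A choose card P) * (card P choose card Q))"
    using f1 f2 e2' by simp
  show ?thesis unfolding c_def[symmetric] using f3 by simp
qed

definition Pos :: "nat \<Rightarrow> nat \<Rightarrow> nat \<Rightarrow> nat set" where
  "Pos K \<alpha> i = (if i \<le> K - \<alpha> then {i..i+\<alpha>-1} else {1..i - (K-\<alpha>+1)} \<union> {i..K})"

locale posn =
  fixes K \<alpha> :: nat
  assumes a1: "1 \<le> \<alpha>" and a2: "\<alpha> + 1 \<le> K"
begin

lemma Pos_mem: "i \<in> {1..K} \<Longrightarrow> i \<in> Pos K \<alpha> i"
  using a1 a2 by (auto simp: Pos_def)

lemma Pos_sub: "i \<in> {1..K} \<Longrightarrow> Pos K \<alpha> i \<subseteq> {1..K}"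
  using a1 a2 by (auto simp: Pos_def)

lemma Pos_card: "i \<in> {1..K} \<Longrightarrow> card (Pos K \<alpha> i) = \<alpha>"
proof -
  assume i: "i \<in> {1..K}"
  show ?thesis
  proof (cases "i \<le> K - \<alpha>")
    case True then show ?thesis using a1 by (simp add: Pos_def)
  next
    case False
    then have "Pos K \<alpha> i = {1..i - (K-\<alpha>+1)} \<union> {i..K}" by (simp add: Pos_def)
    moreover have "card ({1..i - (K-\<alpha>+1)} \<union> {i..K}) = (i - (K-\<alpha>+1)) + (K + 1 - i)"
      by (subst card_Un_disjoint) (use False a1 a2 i in auto)
    ultimately show ?thesis using False a1 a2 i by simp
  qed
qed

lemma Pos_rank: "i \<in> {1..K} \<Longrightarrow> card (Pos K \<alpha> i \<inter> {1..i}) = (if i \<le> K - \<alpha> then 1 else i - (K - \<alpha>))"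
proof -
  assume i: "i \<in> {1..K}"
  show ?thesis
  proof (cases "i \<le> K - \<alpha>")
    case True
    then have "Pos K \<alpha> i \<inter> {1..i} = {i}" using a1 i by (auto simp: Pos_def)
    then show ?thesis using True by simp
  next
    case False
    then have "Pos K \<alpha> i \<inter> {1..i} = {1..i - (K-\<alpha>+1)} \<union> {i}" using a1 a2 i by (auto simp: Pos_def)
    moreover have "card ({1..i - (K-\<alpha>+1)} \<union> {i}) = (i - (K-\<alpha>+1)) + 1"
      by (subst card_Un_disjoint) (use False a1 a2 i in auto)
    ultimately show ?thesis using False a1 a2 i by simp
  qed
qed

lemma Pos_inj: "inj_on (Pos K \<alpha>) {1..K}"
proof (rule inj_onI)
  fix i i' assume i: "i \<in> {1..K}" and i': "i' \<in> {1..K}" and eq: "Pos K \<alpha> i = Pos K \<alpha> i'"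
  have Kin: "K \<in> Pos K \<alpha> x \<longleftrightarrow> \<not> x \<le> K - \<alpha>" if "x \<in> {1..K}" for x
  proof (cases "x \<le> K - \<alpha>")
    case True
    then have "Pos K \<alpha> x = {x..x+\<alpha>-1}" by (simp add: Pos_def)
    moreover have "x + \<alpha> - 1 < K" using True a1 a2 by linarith
    ultimately show ?thesis using True by auto
  next
    case False
    then have "Pos K \<alpha> x = {1..x - (K-\<alpha>+1)} \<union> {x..K}" by (simp add: Pos_def)
    then show ?thesis using False that by auto
  qed
  show "i = i'"
  proof (cases "i \<le> K - \<alpha>")
    case True
    then have "\<not> K \<in> Pos K \<alpha> i'" using eq Kin[OF i] by simp
    then have T': "i' \<le> K - \<alpha>" using Kin[OF i'] by simp
    have mn: "Min (Pos K \<alpha> x) = x" if "x \<le> K - \<alpha>" for x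
    proof -
      have "Pos K \<alpha> x = {x..x+\<alpha>-1}" using that by (simp add: Pos_def)
      moreover have "Min {x..x+\<alpha>-1} = x" using a1 by (intro Min_eqI) simp_all
      ultimately show ?thesis by simp
    qed
    have "Min (Pos K \<alpha> i) = i" using mn[OF True] .
    moreover have "Min (Pos K \<alpha> i') = i'" using mn[OF T'] .
    ultimately show ?thesis using eq by metis
  next
    case False
    then have "K \<in> Pos K \<alpha> i'" using eq Kin[OF i] by simp
    then have F': "\<not> i' \<le> K - \<alpha>" using Kin[OF i'] by simp
    have key: "x - 1 \<notin> Pos K \<alpha> x \<and> {x..K} \<subseteq> Pos K \<alpha> x" if "x \<in> {1..K}" "\<not> x \<le> K - \<alpha>" for x
    proof -
      have e: "Pos K \<alpha> x = {1..x - (K-\<alpha>+1)} \<union> {x..K}" using that(2) by (simp add: Pos_def)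
      have "x - 1 \<notin> {1..x - (K-\<alpha>+1)}" using that a2 by auto
      moreover have "x - 1 \<notin> {x..K}" using that by auto
      ultimately show ?thesis using e by auto
    qed
    show ?thesis
    proof (rule ccontr)
      assume ne: "i \<noteq> i'"
      show False
      proof (cases "i < i'")
        case True
        then have "i' - 1 \<in> {i..K}" using i' by auto
        then have "i' - 1 \<in> Pos K \<alpha> i" using key[OF i False] by blast
        then have "i' - 1 \<in> Pos K \<alpha> i'" using eq by simp
        then show False using key[OF i' F'] by blast
      next
        case False2: False
        then have "i - 1 \<in> {i'..K}" using i ne by auto
        then have "i - 1 \<in> Pos K \<alpha> i'" using key[OF i' F'] by blast
        then have "i - 1 \<in> Pos K \<alpha> i" using eq by simp
        then show False using key[OF i False] by blast
      qed
    qed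
  qed
qed

end

definition Tset :: "(nat \<Rightarrow> (fidx \<times> nat) set) \<Rightarrow> nat \<Rightarrow> fidx \<Rightarrow> nat \<Rightarrow> nat set" where
  "Tset Z K n b = {k \<in> {1..K}. (n, b) \<in> Z k}"

lemma step1:
  fixes enc :: "(nat \<Rightarrow> fidx) \<Rightarrow> (fidx \<Rightarrow> nat \<Rightarrow> bool) \<Rightarrow> bool list"
    and dec :: "(nat \<Rightarrow> fidx) \<Rightarrow> nat \<Rightarrow> bool list \<Rightarrow> (fidx \<times> nat \<Rightarrow> bool) \<Rightarrow> nat \<Rightarrow> bool"
  assumes dec: "\<forall>d. admissible_demand K \<alpha> F d \<longrightarrow>
           (\<forall>w. real (length (enc d w)) \<le> R * real B \<and>
                (\<forall>k\<in>{1..K}. \<forall>b<B. dec d k (enc d w) (cache_content Z k w) b = w (d k) b))"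
    and pl: "us_placement K \<alpha> F B M Z"
    and f: "f \<in> {1..F}" and u: "u permutes {1..K}"
    and a1: "1 \<le> \<alpha>" and a2: "\<alpha> + 1 \<le> K"
  shows "(\<Sum>i=1..K. real (card {b. b < B \<and> Tset Z K (f, u ` Pos K \<alpha> i) b \<inter> u ` (Pos K \<alpha> i \<inter> {1..i}) = {}})) \<le> R * real B"
proof -
  interpret posn K \<alpha> using a1 a2 by unfold_locales
  define d where "d k = (f, u ` Pos K \<alpha> (inv u k))" for k
  have uin: "u x \<in> {1..K} \<longleftrightarrow> x \<in> {1..K}" for x using permutes_in_image[OF u] .
  have invin: "inv u x \<in> {1..K} \<longleftrightarrow> x \<in> {1..K}" for x using permutes_in_image[OF permutes_inv[OF u]] .
  have injU: "inj u" using permutes_inj[OF u] .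
  have du: "d (u i) = (f, u ` Pos K \<alpha> i)" for i using permutes_inverses(2)[OF u] by (simp add: d_def)
  have adm: "admissible_demand K \<alpha> F d"
    unfolding admissible_demand_def
  proof
    fix k assume k: "k \<in> {1..K}"
    then have ik: "inv u k \<in> {1..K}" using invin by simp
    have "u ` Pos K \<alpha> (inv u k) \<subseteq> {1..K}" using Pos_sub[OF ik] uin by auto
    moreover have "card (u ` Pos K \<alpha> (inv u k)) = \<alpha>"
      using Pos_card[OF ik] card_image[OF inj_on_subset[OF injU subset_UNIV]] by simp
    moreover have "k \<in> u ` Pos K \<alpha> (inv u k)"
      using Pos_mem[OF ik] permutes_inverses(1)[OF u] by (metis image_eqI)
    ultimately show "d k \<in> lib K \<alpha> F \<and> k \<in> snd (d k)" using f by (auto simp: d_def lib_def)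
  qed
  have D: "\<forall>w. real (length (enc d w)) \<le> R * real B \<and>
                (\<forall>k\<in>{1..K}. \<forall>b<B. dec d k (enc d w) (cache_content Z k w) b = w (d k) b)"
    using dec adm by blast
  have injd: "inj_on (\<lambda>i. d (u i)) {1..K}"
  proof (rule inj_onI)
    fix i i' assume "i \<in> {1..K}" "i' \<in> {1..K}" "d (u i) = d (u i')"
    then show "i = i'" using du inj_image_eq_iff[OF injU] inj_onD[OF Pos_inj] by auto
  qed
  have C: "real (\<Sum>i=1..K. card {b. b < B \<and> (\<forall>j\<in>{1..i}. (d (u i), b) \<notin> Z (u j))}) \<le> R * real B"
    by (rule core[where E="enc d" and Dk="dec d" and e=d and v=u and K=K]) (use D uin injd in auto)
  have selfish: "k \<in> snd n" if "(n, b) \<in> Z k" "k \<in> {1..K}" for n b k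
    using pl that unfolding us_placement_def by blast
  have eqs: "{b. b < B \<and> (\<forall>j\<in>{1..i}. (d (u i), b) \<notin> Z (u j))}
      = {b. b < B \<and> Tset Z K (f, u ` Pos K \<alpha> i) b \<inter> u ` (Pos K \<alpha> i \<inter> {1..i}) = {}}"
    if i: "i \<in> {1..K}" for i
  proof -
    have "(\<forall>j\<in>{1..i}. (d (u i), b) \<notin> Z (u j)) \<longleftrightarrow> Tset Z K (f, u ` Pos K \<alpha> i) b \<inter> u ` (Pos K \<alpha> i \<inter> {1..i}) = {}" for b
    proof
      assume H: "\<forall>j\<in>{1..i}. (d (u i), b) \<notin> Z (u j)"
      show "Tset Z K (f, u ` Pos K \<alpha> i) b \<inter> u ` (Pos K \<alpha> i \<inter> {1..i}) = {}"
        using H du by (auto simp: Tset_def)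
    next
      assume H: "Tset Z K (f, u ` Pos K \<alpha> i) b \<inter> u ` (Pos K \<alpha> i \<inter> {1..i}) = {}"
      show "\<forall>j\<in>{1..i}. (d (u i), b) \<notin> Z (u j)"
      proof (intro ballI notI)
        fix j assume j: "j \<in> {1..i}" and z: "(d (u i), b) \<in> Z (u j)"
        have jK: "j \<in> {1..K}" using j i by auto
        then have ujK: "u j \<in> {1..K}" using uin by simp
        have "u j \<in> u ` Pos K \<alpha> i" using selfish[OF z ujK] du by simp
        then have "j \<in> Pos K \<alpha> i" using injU by (auto dest: injD)
        then have "u j \<in> u ` (Pos K \<alpha> i \<inter> {1..i})" using j by auto
        moreover have "u j \<in> Tset Z K (f, u ` Pos K \<alpha> i) b" using z du ujK by (simp add: Tset_def)
        ultimately show False using H by auto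
      qed
    qed
    then show ?thesis by simp
  qed
  have "(\<Sum>i=1..K. real (card {b. b < B \<and> Tset Z K (f, u ` Pos K \<alpha> i) b \<inter> u ` (Pos K \<alpha> i \<inter> {1..i}) = {}}))
      = real (\<Sum>i=1..K. card {b. b < B \<and> (\<forall>j\<in>{1..i}. (d (u i), b) \<notin> Z (u j))})"
    using eqs by simp
  then show ?thesis using C by simp
qed

lemma choose_swap:
  assumes "r \<le> n" "l \<le> n"
  shows "((n - l) choose r) * (n choose l) = ((n - r) choose l) * (n choose r)"
proof (cases "r + l \<le> n")
  case True
  have e1: "(n choose (r+l)) * ((r+l) choose r) = (n choose r) * ((n - r) choose l)"
    using choose_mult[of r "r+l" n] True by simp
  have e2: "(n choose (r+l)) * ((r+l) choose l) = (n choose l) * ((n - l) choose r)"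
    using choose_mult[of l "r+l" n] True by simp
  have "(r+l) choose r = (r+l) choose l" using binomial_symmetric[of r "r+l"] by simp
  then show ?thesis using e1 e2 by (simp add: mult.commute)
next
  case False
  then have "n - l < r" "n - r < l" using assms by auto
  then show ?thesis by (simp add: binomial_eq_0)
qed

lemma sum_choose_rev: "n \<ge> 1 \<Longrightarrow> (\<Sum>r=1..n. (n - r) choose l) = n choose Suc l"
proof -
  assume n: "n \<ge> 1"
  have "(\<Sum>r=1..n. (n - r) choose l) = (\<Sum>i<n. (n - Suc i) choose l)"
    by (simp add: sum.atLeast1_atMost_eq)
  also have "\<dots> = (\<Sum>i<n. i choose l)" by (rule sum.nat_diff_reindex)
  also have "\<dots> = (\<Sum>i\<le>n-1. i choose l)" using n by (metis Suc_diff_1 lessThan_Suc_atMost less_le_trans zero_less_one)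
  also have "\<dots> = n choose Suc l" using sum_choose_upper[of l "n-1"] n by simp
  finally show ?thesis .
qed

lemma sum_ratio:
  assumes "l \<le> n"
  shows "(\<Sum>r=1..n. real ((n - l) choose r) / real (n choose r)) = (real n - real l) / (real l + 1)"
proof (cases "n = 0")
  case True then show ?thesis using assms by simp
next
  case False
  then have n: "n \<ge> 1" by simp
  have pos: "real (n choose l) > 0" using assms by simp
  have "(\<Sum>r=1..n. real ((n - l) choose r) / real (n choose r))
      = (\<Sum>r=1..n. real ((n - r) choose l) / real (n choose l))"
  proof (rule sum.cong[OF refl])
    fix r assume r: "r \<in> {1..n}"
    then have pr: "real (n choose r) > 0" by simp
    have "real ((n - l) choose r) * real (n choose l) = real ((n - r) choose l) * real (n choose r)"
      using choose_swap[of r n l] r assms by (metis atLeastAtMost_iff of_nat_mult)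
    then show "real ((n - l) choose r) / real (n choose r) = real ((n - r) choose l) / real (n choose l)"
      using pos pr by (simp add: field_simps)
  qed
  also have "\<dots> = real (\<Sum>r=1..n. (n - r) choose l) / real (n choose l)"
    by (simp add: sum_divide_distrib)
  also have "\<dots> = real (n choose Suc l) / real (n choose l)" using sum_choose_rev[OF n] by simp
  also have "\<dots> = (real n - real l) / (real l + 1)"
  proof -
    have a: "Suc l * (n choose Suc l) = n * ((n-1) choose l)"
      using Suc_times_binomial[of l "n-1"] n by simp
    have b: "(n - l) * (n choose l) = n * ((n - 1) choose l)" by (rule binomial_absorb_comp)
    have "real (Suc l) * real (n choose Suc l) = real (n - l) * real (n choose l)"
      using a b by (metis of_nat_mult)
    then show ?thesis using pos assms by (simp add: field_simps of_nat_diff)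
  qed
  finally show ?thesis .
qed

lemma pairs_sum:
  fixes T :: "nat set \<Rightarrow> nat \<Rightarrow> nat set"
  assumes fin: "finite A" and TS: "\<And>S b. T S b \<subseteq> S"
  shows "(\<Sum>(S,V)\<in>{(S,V). S \<subseteq> A \<and> card S = a \<and> V \<subseteq> S \<and> card V = r}. real (card {b. b < B \<and> T S b \<inter> V = {}}))
       = (\<Sum>S\<in>{S. S \<subseteq> A \<and> card S = a}. \<Sum>b<B. real ((a - card (T S b)) choose r))"
proof -
  have eq: "{(S,V). S \<subseteq> A \<and> card S = a \<and> V \<subseteq> S \<and> card V = r}
      = (SIGMA S:{S. S \<subseteq> A \<and> card S = a}. {V. V \<subseteq> S \<and> card V = r})" by auto
  have finS: "finite {S. S \<subseteq> A \<and> card S = a}" using fin by (auto intro: rev_finite_subset[of "Pow A"])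
  have finV: "\<forall>S\<in>{S. S \<subseteq> A \<and> card S = a}. finite {V. V \<subseteq> S \<and> card V = r}"
    using fin by (auto intro: rev_finite_subset[of "Pow A"])
  have "(\<Sum>(S,V)\<in>{(S,V). S \<subseteq> A \<and> card S = a \<and> V \<subseteq> S \<and> card V = r}. real (card {b. b < B \<and> T S b \<inter> V = {}}))
      = (\<Sum>S\<in>{S. S \<subseteq> A \<and> card S = a}. \<Sum>V\<in>{V. V \<subseteq> S \<and> card V = r}. real (card {b. b < B \<and> T S b \<inter> V = {}}))"
    unfolding eq by (rule sum.Sigma[symmetric, OF finS finV])
  also have "\<dots> = (\<Sum>S\<in>{S. S \<subseteq> A \<and> card S = a}. \<Sum>b<B. real ((a - card (T S b)) choose r))"
  proof (rule sum.cong[OF refl])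
    fix S assume S: "S \<in> {S. S \<subseteq> A \<and> card S = a}"
    have fS: "finite S" using S fin finite_subset by blast
    have fVs: "finite {V. V \<subseteq> S \<and> card V = r}" using fS by (auto intro: rev_finite_subset[of "Pow S"])
    have "(\<Sum>V\<in>{V. V \<subseteq> S \<and> card V = r}. real (card {b. b < B \<and> T S b \<inter> V = {}}))
        = (\<Sum>V\<in>{V. V \<subseteq> S \<and> card V = r}. \<Sum>b<B. (of_bool (T S b \<inter> V = {}) :: real))"
    proof (rule sum.cong[OF refl])
      fix V
      have "{b. b < B \<and> T S b \<inter> V = {}} = {..<B} \<inter> {b. T S b \<inter> V = {}}" by auto
      then show "real (card {b. b < B \<and> T S b \<inter> V = {}}) = (\<Sum>b<B. (of_bool (T S b \<inter> V = {}) :: real))"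
        by simp
    qed
    also have "\<dots> = (\<Sum>b<B. \<Sum>V\<in>{V. V \<subseteq> S \<and> card V = r}. (of_bool (T S b \<inter> V = {}) :: real))"
      by (rule sum.swap)
    also have "\<dots> = (\<Sum>b<B. real ((a - card (T S b)) choose r))"
    proof (rule sum.cong[OF refl])
      fix b
      have "{V. V \<subseteq> S \<and> card V = r} \<inter> {V. T S b \<inter> V = {}} = {V. V \<subseteq> S - T S b \<and> card V = r}" by auto
      moreover have "card {V. V \<subseteq> S - T S b \<and> card V = r} = card (S - T S b) choose r"
        using fS by (intro n_subsets) auto
      moreover have "card (S - T S b) = a - card (T S b)"
        using S TS[of S b] fS by (simp add: card_Diff_subset finite_subset)
      ultimately show "(\<Sum>V\<in>{V. V \<subseteq> S \<and> card V = r}. (of_bool (T S b \<inter> V = {}) :: real))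
          = real ((a - card (T S b)) choose r)"
        using fVs by simp
    qed
    finally show "(\<Sum>V\<in>{V. V \<subseteq> S \<and> card V = r}. real (card {b. b < B \<and> T S b \<inter> V = {}}))
        = (\<Sum>b<B. real ((a - card (T S b)) choose r))" .
  qed
  finally show ?thesis .
qed

definition gsum :: "nat \<Rightarrow> nat \<Rightarrow> nat \<Rightarrow> real" where
  "gsum K \<alpha> l = (\<Sum>i=1..K. real ((\<alpha> - l) choose card (Pos K \<alpha> i \<inter> {1..i})) / real (\<alpha> choose card (Pos K \<alpha> i \<inter> {1..i})))"

lemma gsum_closed:
  assumes a1: "1 \<le> \<alpha>" and a2: "\<alpha> + 1 \<le> K" and l: "l \<le> \<alpha>"
  shows "gsum K \<alpha> l = real (K - \<alpha>) * (real \<alpha> - real l) / real \<alpha> + (real \<alpha> - real l) / (real l + 1)"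
proof -
  interpret posn K \<alpha> using a1 a2 by unfold_locales
  define h where "h r = real ((\<alpha> - l) choose r) / real (\<alpha> choose r)" for r
  have split: "{1..K} = {1..K-\<alpha>} \<union> {K-\<alpha>+1..K}" using a2 by auto
  have "gsum K \<alpha> l = (\<Sum>i\<in>{1..K-\<alpha>} \<union> {K-\<alpha>+1..K}. h (card (Pos K \<alpha> i \<inter> {1..i})))"
    unfolding gsum_def h_def using split by simp
  also have "\<dots> = (\<Sum>i\<in>{1..K-\<alpha>}. h (card (Pos K \<alpha> i \<inter> {1..i}))) + (\<Sum>i\<in>{K-\<alpha>+1..K}. h (card (Pos K \<alpha> i \<inter> {1..i})))"
    by (rule sum.union_disjoint) auto
  also have "(\<Sum>i\<in>{1..K-\<alpha>}. h (card (Pos K \<alpha> i \<inter> {1..i}))) = (\<Sum>i\<in>{1..K-\<alpha>}. h 1)"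
    by (rule sum.cong[OF refl]) (subst Pos_rank, auto)
  also have "\<dots> = real (K - \<alpha>) * ((real \<alpha> - real l) / real \<alpha>)"
    using l by (simp add: h_def of_nat_diff)
  also have "(\<Sum>i\<in>{K-\<alpha>+1..K}. h (card (Pos K \<alpha> i \<inter> {1..i}))) = (\<Sum>i\<in>{K-\<alpha>+1..K}. h (i - (K - \<alpha>)))"
    by (rule sum.cong[OF refl]) (subst Pos_rank, auto)
  also have "\<dots> = (\<Sum>r\<in>{1..\<alpha>}. h r)"
  proof -
    have e: "{K-\<alpha>+1..K} = {1 + (K-\<alpha>)..\<alpha> + (K-\<alpha>)}" using a2 by auto
    have "(\<Sum>i\<in>{1 + (K-\<alpha>)..\<alpha> + (K-\<alpha>)}. h (i - (K - \<alpha>))) = (\<Sum>i\<in>{1..\<alpha>}. h (i + (K-\<alpha>) - (K - \<alpha>)))"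
      by (rule sum.shift_bounds_cl_nat_ivl)
    then have "(\<Sum>i\<in>{K-\<alpha>+1..K}. h (i - (K - \<alpha>))) = (\<Sum>i\<in>{1..\<alpha>}. h (i + (K-\<alpha>) - (K - \<alpha>)))"
      unfolding e .
    then show ?thesis by simp
  qed
  also have "\<dots> = (real \<alpha> - real l) / (real l + 1)"
    unfolding h_def using sum_ratio[OF l] by simp
  finally show ?thesis by simp
qed

lemma per_f:
  fixes enc :: "(nat \<Rightarrow> fidx) \<Rightarrow> (fidx \<Rightarrow> nat \<Rightarrow> bool) \<Rightarrow> bool list"
    and dec :: "(nat \<Rightarrow> fidx) \<Rightarrow> nat \<Rightarrow> bool list \<Rightarrow> (fidx \<times> nat \<Rightarrow> bool) \<Rightarrow> nat \<Rightarrow> bool"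
  assumes dec: "\<forall>d. admissible_demand K \<alpha> F d \<longrightarrow>
           (\<forall>w. real (length (enc d w)) \<le> R * real B \<and>
                (\<forall>k\<in>{1..K}. \<forall>b<B. dec d k (enc d w) (cache_content Z k w) b = w (d k) b))"
    and pl: "us_placement K \<alpha> F B M Z"
    and f: "f \<in> {1..F}"
    and a1: "1 \<le> \<alpha>" and a2: "\<alpha> + 1 \<le> K"
  shows "(\<Sum>S\<in>{S. S \<subseteq> {1..K} \<and> card S = \<alpha>}. \<Sum>b<B. gsum K \<alpha> (card (Tset Z K (f,S) b)))
         \<le> real (K choose \<alpha>) * (R * real B)"
proof -
  interpret posn K \<alpha> using a1 a2 by unfold_locales
  define A where "A = {1..K}"
  define Sets where "Sets = {S. S \<subseteq> A \<and> card S = \<alpha>}"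
  define Q where "Q i = Pos K \<alpha> i \<inter> {1..i}" for i
  define rk where "rk i = card (Q i)" for i
  define T where "T S b = Tset Z K (f,S) b" for S b
  define Y where "Y i = (\<Sum>S\<in>Sets. \<Sum>b<B. real ((\<alpha> - card (T S b)) choose rk i))" for i
  define c where "c i = card {u. u permutes A \<and> u ` Pos K \<alpha> i = Pos K \<alpha> i \<and> u ` Q i = Q i}" for i
  have finA: "finite A" unfolding A_def by simp
  have cardA: "card A = K" unfolding A_def by simp
  have TS: "T S b \<subseteq> S" for S b
    using pl unfolding T_def Tset_def us_placement_def by fastforce
  have QP: "Q i \<subseteq> Pos K \<alpha> i" for i unfolding Q_def by auto
  have PA: "i \<in> {1..K} \<Longrightarrow> Pos K \<alpha> i \<subseteq> A" for i unfolding A_def by (rule Pos_sub)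
  have rkle: "i \<in> {1..K} \<Longrightarrow> rk i \<le> \<alpha>" for i
    unfolding rk_def using card_mono[OF finite_subset[OF PA finA] QP] Pos_card by metis
  have h1: "(\<Sum>u\<in>{u. u permutes A}. real (card {b. b < B \<and> T (u ` Pos K \<alpha> i) b \<inter> u ` Q i = {}})) = real (c i) * Y i"
    if i: "i \<in> {1..K}" for i
  proof -
    have "(\<Sum>u\<in>{u. u permutes A}. real (card {b. b < B \<and> T (u ` Pos K \<alpha> i) b \<inter> u ` Q i = {}}))
       = real (c i) * (\<Sum>(S,V)\<in>{(S,V). S \<subseteq> A \<and> card S = card (Pos K \<alpha> i) \<and> V \<subseteq> S \<and> card V = card (Q i)}.
             real (card {b. b < B \<and> T S b \<inter> V = {}}))"
      unfolding c_def by (rule sum_perms[OF finA QP PA[OF i]])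
    also have "\<dots> = real (c i) * Y i"
      unfolding Y_def Sets_def rk_def using pairs_sum[OF finA TS, where a=\<alpha> and r="card (Q i)" and B=B] Pos_card[OF i] by simp
    finally show ?thesis .
  qed
  have h2: "real (c i) * real ((K choose \<alpha>) * (\<alpha> choose rk i)) = fact K" if i: "i \<in> {1..K}" for i
    using fiber_times_pairs[OF finA QP PA[OF i]] Pos_card[OF i] cardA unfolding c_def rk_def by simp
  have h3: "(\<Sum>u\<in>{u. u permutes A}. \<Sum>i=1..K. real (card {b. b < B \<and> T (u ` Pos K \<alpha> i) b \<inter> u ` Q i = {}}))
      \<le> (\<Sum>u\<in>{u. u permutes A}. R * real B)"
  proof (rule sum_mono)
    fix u assume "u \<in> {u. u permutes A}"
    then have u: "u permutes {1..K}" unfolding A_def by simp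
    show "(\<Sum>i=1..K. real (card {b. b < B \<and> T (u ` Pos K \<alpha> i) b \<inter> u ` Q i = {}})) \<le> R * real B"
      using step1[OF dec pl f u a1 a2] unfolding T_def Q_def .
  qed
  also have "\<dots> = fact K * (R * real B)"
    using card_permutations[OF cardA finA] by simp
  finally have h4: "(\<Sum>i=1..K. real (c i) * Y i) \<le> fact K * (R * real B)"
    using h1 sum.swap[where g="\<lambda>u i. real (card {b. b < B \<and> T (u ` Pos K \<alpha> i) b \<inter> u ` Q i = {}})" and A="{u. u permutes A}" and B="{1..K}"]
    by simp
  have cK: "real (K choose \<alpha>) > 0" using a2 by simp
  have h5: "real (c i) * Y i = fact K / real (K choose \<alpha>) * (Y i / real (\<alpha> choose rk i))" if i: "i \<in> {1..K}" for i
  proof -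
    have p: "real (\<alpha> choose rk i) > 0" using rkle[OF i] by simp
    have "real (c i) = fact K / (real (K choose \<alpha>) * real (\<alpha> choose rk i))"
      using h2[OF i] cK p by (simp add: field_simps)
    then show ?thesis using cK p by (simp add: field_simps)
  qed
  have "fact K / real (K choose \<alpha>) * (\<Sum>i=1..K. Y i / real (\<alpha> choose rk i)) \<le> fact K * (R * real B)"
    using h4 h5 by (simp add: sum_distrib_left)
  then have h6: "(\<Sum>i=1..K. Y i / real (\<alpha> choose rk i)) \<le> real (K choose \<alpha>) * (R * real B)"
    using cK by (simp add: field_simps)
  have "(\<Sum>S\<in>{S. S \<subseteq> {1..K} \<and> card S = \<alpha>}. \<Sum>b<B. gsum K \<alpha> (card (Tset Z K (f,S) b)))
      = (\<Sum>S\<in>Sets. \<Sum>b<B. \<Sum>i=1..K. real ((\<alpha> - card (T S b)) choose rk i) / real (\<alpha> choose rk i))"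
    unfolding gsum_def Sets_def A_def T_def rk_def Q_def by simp
  also have "\<dots> = (\<Sum>S\<in>Sets. \<Sum>i=1..K. \<Sum>b<B. real ((\<alpha> - card (T S b)) choose rk i) / real (\<alpha> choose rk i))"
    by (rule sum.cong[OF refl], rule sum.swap)
  also have "\<dots> = (\<Sum>i=1..K. \<Sum>S\<in>Sets. \<Sum>b<B. real ((\<alpha> - card (T S b)) choose rk i) / real (\<alpha> choose rk i))"
    by (rule sum.swap)
  also have "\<dots> = (\<Sum>i=1..K. Y i / real (\<alpha> choose rk i))"
    unfolding Y_def by (simp add: sum_divide_distrib)
  finally show ?thesis using h6 by simp
qed

lemma bits_sum:
  assumes pl: "us_placement K \<alpha> F B M Z"
  shows "(\<Sum>f\<in>{1..F}. \<Sum>S\<in>{S. S \<subseteq> {1..K} \<and> card S = \<alpha>}. \<Sum>b<B. real (card (Tset Z K (f,S) b)))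
       = (\<Sum>k\<in>{1..K}. real (card (Z k)))"
proof -
  define Sets where "Sets = {S. S \<subseteq> {1..K} \<and> card S = \<alpha>}"
  define Bits where "Bits = ({1..F} \<times> Sets) \<times> {..<B}"
  have finSets: "finite Sets" unfolding Sets_def by (auto intro: rev_finite_subset[of "Pow {1..K}"])
  have finBits: "finite Bits" unfolding Bits_def using finSets by simp
  have libeq: "lib K \<alpha> F = {1..F} \<times> Sets" unfolding lib_def Sets_def by auto
  have Zsub: "Z k \<subseteq> Bits" if "k \<in> {1..K}" for k
    using pl that unfolding us_placement_def Bits_def libeq[symmetric] by fastforce
  have "(\<Sum>f\<in>{1..F}. \<Sum>S\<in>Sets. \<Sum>b<B. real (card (Tset Z K (f,S) b)))
      = (\<Sum>x\<in>Bits. real (card (Tset Z K (fst x) (snd x))))"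
    unfolding Bits_def sum.cartesian_product' by (simp add: sum.cartesian_product')
  also have "\<dots> = (\<Sum>x\<in>Bits. \<Sum>k\<in>{1..K}. (of_bool (x \<in> Z k) :: real))"
  proof (rule sum.cong[OF refl])
    fix x :: "fidx \<times> nat"
    have "Tset Z K (fst x) (snd x) = {1..K} \<inter> {k. x \<in> Z k}" unfolding Tset_def by auto
    then show "real (card (Tset Z K (fst x) (snd x))) = (\<Sum>k\<in>{1..K}. (of_bool (x \<in> Z k) :: real))"
      by simp
  qed
  also have "\<dots> = (\<Sum>k\<in>{1..K}. \<Sum>x\<in>Bits. (of_bool (x \<in> Z k) :: real))" by (rule sum.swap)
  also have "\<dots> = (\<Sum>k\<in>{1..K}. real (card (Z k)))"
  proof (rule sum.cong[OF refl])
    fix k assume k: "k \<in> {1..K}"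
    have "Bits \<inter> {x. x \<in> Z k} = Z k" using Zsub[OF k] by auto
    then show "(\<Sum>x\<in>Bits. (of_bool (x \<in> Z k) :: real)) = real (card (Z k))"
      using finBits by simp
  qed
  finally show ?thesis unfolding Sets_def .
qed

definition Gt :: "nat \<Rightarrow> nat \<Rightarrow> nat \<Rightarrow> real" where
  "Gt K \<alpha> t = real (K - \<alpha>) * (real \<alpha> - real t) / real \<alpha> + (real \<alpha> - real t) / (real t + 1)"

definition st :: "nat \<Rightarrow> nat \<Rightarrow> nat \<Rightarrow> real" where
  "st K \<alpha> t = - real (K - \<alpha>) / real \<alpha> - (real \<alpha> + 1) / (real t + 1)^2"

lemma key_ineq:
  fixes a x y :: real
  assumes "a \<ge> 0" "x > 0" "y > 0"
  shows "(a - x) / x \<ge> (a - y) / y - a * (x - y) / y^2"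
proof -
  have e: "(a - x) / x - ((a - y) / y - a * (x - y) / y^2) = a * (x - y)^2 / (x * y^2)"
    using assms by (simp add: field_simps power2_eq_square)
  have "a * (x - y)^2 / (x * y^2) \<ge> 0" using assms by simp
  then show ?thesis using e by linarith
qed

lemma lin:
  assumes a1: "1 \<le> \<alpha>" and a2: "\<alpha> + 1 \<le> K" and l: "l \<le> \<alpha>"
  shows "gsum K \<alpha> l \<ge> Gt K \<alpha> t + st K \<alpha> t * (real l - real t)"
proof -
  have g: "gsum K \<alpha> l = real (K - \<alpha>) * (real \<alpha> - real l) / real \<alpha> + (real \<alpha> - real l) / (real l + 1)"
    by (rule gsum_closed[OF a1 a2 l])
  have k: "((real \<alpha> + 1) - (real l + 1)) / (real l + 1) \<ge> ((real \<alpha> + 1) - (real t + 1)) / (real t + 1)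
      - (real \<alpha> + 1) * ((real l + 1) - (real t + 1)) / (real t + 1)^2"
    by (rule key_ineq) auto
  have a0: "real \<alpha> > 0" using a1 by simp
  have lin1: "real (K - \<alpha>) * (real \<alpha> - real l) / real \<alpha>
      = real (K - \<alpha>) * (real \<alpha> - real t) / real \<alpha> - real (K - \<alpha>) / real \<alpha> * (real l - real t)"
    using a0 by (simp add: field_simps)
  show ?thesis using g k lin1 unfolding Gt_def st_def by (simp add: algebra_simps diff_divide_distrib)
qed

lemma lower_bound:
  fixes t :: nat
  assumes a1: "1 \<le> \<alpha>" and a2: "\<alpha> + 1 \<le> K" and F: "F \<ge> 1"
    and ach: "us_achievable K \<alpha> F (real t * real (F * (K choose \<alpha>)) / real K) R"
  shows "Gt K \<alpha> t \<le> R"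
proof -
  define N where "N = F * (K choose \<alpha>)"
  define M where "M = real t * real N / real K"
  obtain B Z and enc :: "(nat \<Rightarrow> fidx) \<Rightarrow> (fidx \<Rightarrow> nat \<Rightarrow> bool) \<Rightarrow> bool list"
    and dec :: "(nat \<Rightarrow> fidx) \<Rightarrow> nat \<Rightarrow> bool list \<Rightarrow> (fidx \<times> nat \<Rightarrow> bool) \<Rightarrow> nat \<Rightarrow> bool"
    where B: "B > 0" and pl: "us_placement K \<alpha> F B M Z"
      and dec: "\<forall>d. admissible_demand K \<alpha> F d \<longrightarrow>
           (\<forall>w. real (length (enc d w)) \<le> R * real B \<and>
                (\<forall>k\<in>{1..K}. \<forall>b<B. dec d k (enc d w) (cache_content Z k w) b = w (d k) b))"
    using ach unfolding us_achievable_def M_def N_def by blast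
  define Sets where "Sets = {S. S \<subseteq> {1..K} \<and> card S = \<alpha>}"
  define L where "L f S b = card (Tset Z K (f,S) b)" for f S b
  have finSets: "finite Sets" unfolding Sets_def by (auto intro: rev_finite_subset[of "Pow {1..K}"])
  have cardSets: "card Sets = K choose \<alpha>" unfolding Sets_def using n_subsets[of "{1..K}" \<alpha>] by simp
  have Lle: "L f S b \<le> \<alpha>" if "S \<in> Sets" for f S b
  proof -
    have "Tset Z K (f,S) b \<subseteq> S" using pl unfolding Tset_def us_placement_def by fastforce
    then show ?thesis unfolding L_def using that unfolding Sets_def
      by (metis (mono_tags, lifting) card_mono finite_atLeastAtMost finite_subset mem_Collect_eq)
  qed
  have s1: "(\<Sum>f\<in>{1..F}. \<Sum>S\<in>Sets. \<Sum>b<B. gsum K \<alpha> (L f S b)) \<le> (\<Sum>f\<in>{1..F}. real (K choose \<alpha>) * (R * real B))"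
    by (rule sum_mono) (unfold Sets_def L_def, rule per_f[OF dec pl _ a1 a2], simp)
  also have "\<dots> = real N * R * real B" unfolding N_def by simp
  finally have s1': "(\<Sum>f\<in>{1..F}. \<Sum>S\<in>Sets. \<Sum>b<B. gsum K \<alpha> (L f S b)) \<le> real N * R * real B" .
  have s2: "(\<Sum>f\<in>{1..F}. \<Sum>S\<in>Sets. \<Sum>b<B. Gt K \<alpha> t + st K \<alpha> t * (real (L f S b) - real t))
      \<le> (\<Sum>f\<in>{1..F}. \<Sum>S\<in>Sets. \<Sum>b<B. gsum K \<alpha> (L f S b))"
    by (intro sum_mono lin[OF a1 a2 Lle]) 
  have sumL: "(\<Sum>f\<in>{1..F}. \<Sum>S\<in>Sets. \<Sum>b<B. real (L f S b)) \<le> real t * real N * real B"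
  proof -
    have "(\<Sum>f\<in>{1..F}. \<Sum>S\<in>Sets. \<Sum>b<B. real (L f S b)) = (\<Sum>k\<in>{1..K}. real (card (Z k)))"
      unfolding L_def Sets_def by (rule bits_sum[OF pl])
    also have "\<dots> \<le> (\<Sum>k\<in>{1..K}. M * real B)"
      using pl unfolding us_placement_def by (intro sum_mono) auto
    also have "\<dots> = real t * real N * real B"
      using a2 unfolding M_def by simp
    finally show ?thesis .
  qed
  have expand: "(\<Sum>f\<in>{1..F}. \<Sum>S\<in>Sets. \<Sum>b<B. Gt K \<alpha> t + st K \<alpha> t * (real (L f S b) - real t))
      = real N * real B * (Gt K \<alpha> t - st K \<alpha> t * real t) + st K \<alpha> t * (\<Sum>f\<in>{1..F}. \<Sum>S\<in>Sets. \<Sum>b<B. real (L f S b))"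
    unfolding N_def using cardSets
    by (simp add: sum.distrib sum_distrib_left algebra_simps sum_subtractf)
  have sneg: "st K \<alpha> t \<le> 0"
  proof -
    have "0 \<le> real (K - \<alpha>) / real \<alpha>" by simp
    moreover have "0 \<le> (real \<alpha> + 1) / (real t + 1)^2" by simp
    ultimately show ?thesis unfolding st_def by linarith
  qed
  have "st K \<alpha> t * (\<Sum>f\<in>{1..F}. \<Sum>S\<in>Sets. \<Sum>b<B. real (L f S b)) \<ge> st K \<alpha> t * (real t * real N * real B)"
    using sumL sneg by (rule mult_left_mono_neg)
  then have "real N * real B * Gt K \<alpha> t \<le> real N * R * real B"
    using s1' s2 expand by (simp add: algebra_simps)
  moreover have "real N * real B > 0" using B F a2 unfolding N_def by simp
  ultimately have h: "real N * real B * Gt K \<alpha> t \<le> real N * R * real B" "real N * real B > 0"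
    by blast+
  have eq: "real N * R * real B = (real N * real B) * R" by (simp only: ac_simps)
  have "(real N * real B) * Gt K \<alpha> t \<le> (real N * real B) * R" by (rule ord_le_eq_trans[OF h(1) eq])
  then show ?thesis using mult_le_cancel_left_pos h(2) by blast
qed

lemma achievable_K:
  assumes "M \<ge> 0"
  shows "us_achievable K \<alpha> F M (real K)"
proof -
  define enc :: "(nat \<Rightarrow> fidx) \<Rightarrow> (fidx \<Rightarrow> nat \<Rightarrow> bool) \<Rightarrow> bool list"
    where "enc d w = map (\<lambda>k. w (d k) 0) [1..<K+1]" for d w
  define dec :: "(nat \<Rightarrow> fidx) \<Rightarrow> nat \<Rightarrow> bool list \<Rightarrow> (fidx \<times> nat \<Rightarrow> bool) \<Rightarrow> nat \<Rightarrow> bool"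
    where "dec d k m c b = m ! (k - 1)" for d k m c b
  have "us_placement K \<alpha> F 1 M (\<lambda>k. {})" unfolding us_placement_def using assms by simp
  moreover have "\<forall>d. admissible_demand K \<alpha> F d \<longrightarrow>
           (\<forall>w. real (length (enc d w)) \<le> real K * real (1::nat) \<and>
                (\<forall>k\<in>{1..K}. \<forall>b<1. dec d k (enc d w) (cache_content (\<lambda>k. {}) k w) b = w (d k) b))"
    unfolding enc_def dec_def by (auto simp del: upt_Suc simp add: nth_upt)
  ultimately show ?thesis unfolding us_achievable_def by (intro exI[of _ 1]) blast
qed

theorem corollary1:
  fixes K \<alpha> F N :: nat
  assumes "K \<ge> 3" and "2 \<le> \<alpha>" and "\<alpha> \<le> K - 1" and "F \<ge> 1"
    and "N = F * (K choose \<alpha>)" and "N \<ge> K"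
  shows "(\<forall>t\<in>{0..\<alpha>-1}. Rstar_us K \<alpha> F (real t * real N / real K) / R_MAN K t \<ge> 1)
       \<and> (\<forall>t\<in>{1..\<alpha>-2}. Rstar_us K \<alpha> F (real t * real N / real K) / R_MAN K t > 1)"
proof -
  have a1: "1 \<le> \<alpha>" and a2: "\<alpha> + 1 \<le> K" using assms by auto
  have RG: "Gt K \<alpha> t \<le> Rstar_us K \<alpha> F (real t * real N / real K)" for t
    unfolding Rstar_us_def
  proof (rule cInf_greatest)
    show "{R. us_achievable K \<alpha> F (real t * real N / real K) R} \<noteq> {}"
      using achievable_K[of "real t * real N / real K" K \<alpha> F] by auto
    show "\<And>R. R \<in> {R. us_achievable K \<alpha> F (real t * real N / real K) R} \<Longrightarrow> Gt K \<alpha> t \<le> R"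
      using lower_bound[OF a1 a2 assms(4)] assms(5) by auto
  qed
  have diff: "Gt K \<alpha> t - R_MAN K t = real (K - \<alpha>) * real t * (real \<alpha> - real t - 1) / (real \<alpha> * (real t + 1))"
    if "t \<le> \<alpha>" for t
  proof -
    have a0: "real \<alpha> > 0" using a1 by simp
    define k where "k = real (K - \<alpha>)"
    define a where "a = real \<alpha>"
    define x where "x = real t"
    have Ke: "real K = k + a" using a2 unfolding k_def a_def by simp
    have x0: "x + 1 > 0" unfolding x_def by simp
    have e1: "(a - x) / (x + 1) - (real K - x) / (x + 1) = - k / (x + 1)"
      unfolding Ke by (simp add: diff_divide_distrib[symmetric])
    have e2: "k * (a - x) / a - k / (x + 1) = k * x * (a - x - 1) / (a * (x + 1))"
    proof -
      have "k * (a - x) / a - k / (x + 1) = (k * (a - x) * (x + 1) - k * a) / (a * (x + 1))"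
        using a0 x0 unfolding a_def by (simp add: field_simps)
      also have "k * (a - x) * (x + 1) - k * a = k * x * (a - x - 1)"
        by (simp add: algebra_simps)
      finally show ?thesis .
    qed
    have "Gt K \<alpha> t - R_MAN K t = k * (a - x) / a + ((a - x) / (x + 1) - (real K - x) / (x + 1))"
      unfolding Gt_def R_MAN_def k_def a_def x_def by simp
    also have "\<dots> = k * x * (a - x - 1) / (a * (x + 1))" using e1 e2 by simp
    finally show ?thesis unfolding k_def a_def x_def .
  qed
  have MANpos: "R_MAN K t > 0" if "t < K" for t
    unfolding R_MAN_def using that by simp
  have part1: "Rstar_us K \<alpha> F (real t * real N / real K) / R_MAN K t \<ge> 1" if t: "t \<in> {0..\<alpha>-1}" for t
  proof -
    have tl: "t \<le> \<alpha>" "real t \<le> real \<alpha> - 1" using t a1 by auto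
    have "0 \<le> real (K - \<alpha>) * real t * (real \<alpha> - real t - 1) / (real \<alpha> * (real t + 1))"
      using tl by simp
    then have "R_MAN K t \<le> Gt K \<alpha> t" using diff[OF tl(1)] by linarith
    then have "R_MAN K t \<le> Rstar_us K \<alpha> F (real t * real N / real K)" using RG[of t] by linarith
    moreover have "R_MAN K t > 0" using MANpos t a2 by auto
    ultimately show ?thesis by simp
  qed
  have part2: "Rstar_us K \<alpha> F (real t * real N / real K) / R_MAN K t > 1" if t: "t \<in> {1..\<alpha>-2}" for t
  proof -
    have tl: "t \<le> \<alpha>" "real t < real \<alpha> - 1" "real t > 0" using t a1 by auto
    have "real (K - \<alpha>) > 0" using a2 by simp
    then have "0 < real (K - \<alpha>) * real t * (real \<alpha> - real t - 1) / (real \<alpha> * (real t + 1))"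
      using tl a1 by simp
    then have "R_MAN K t < Gt K \<alpha> t" using diff[OF tl(1)] by linarith
    then have "R_MAN K t < Rstar_us K \<alpha> F (real t * real N / real K)" using RG[of t] by linarith
    moreover have "R_MAN K t > 0" using MANpos t a2 by auto
    ultimately show ?thesis by simp
  qed
  show ?thesis using part1 part2 by blast
qed

end
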